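(* Let $M>2$ be an integer, $\tau>0$, $p_{\max}>0$, and $\beta_1>\beta_2>0$. Define $$R^{\mathrm{mMIMO}}_{\max}=\tau\log_2\!\left(\frac{\left(\beta_1+\beta_2+p_{\max}\beta_1\beta_2(M-2)\right)^2}{4\beta_1\beta_2}\right)\ \text{ if } p_{\max}\ge\frac{\beta_1-\beta_2}{\beta_1\beta_2(M-2)},\qquad R^{\mathrm{mMIMO}}_{\max}=\tau\log_2\!\left(1+p_{\max}\beta_1(M-2)\right)\ \text{ otherwise},$$ and $R^{\mathrm{NOMA}}_{\max}=\tau\log_2\left(1+p_{\max}\beta_1M\right)$. Let $$M^*=2+\frac{\beta_1-\beta_2}{p_{\max}\beta_1\beta_2}+\frac{2\sqrt2}{\sqrt{p_{\max}\beta_2}}.$$ Then $R^{\mathrm{mMIMO}}_{\max}\ge R^{\mathrm{NOMA}}_{\max}$ for all $M\ge M^*$.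
   Context: $R^{\mathrm{mMIMO}}_{\max}$ is the maximum two-user sum rate $\max\{\tau\log_2(1+(M-2)p_1\beta_1)+\tau\log_2(1+(M-2)p_2\beta_2): p_1,p_2\ge0,\ p_1+p_2\le p_{\max}\}$ of zero-forcing massive MIMO with perfect CSI, and $R^{\mathrm{NOMA}}_{\max}$ is the maximum two-user sum rate of the considered NOMA scheme (all power to the cell-center user). $\beta_1,\beta_2$ are the large-scale fading coefficients of the cell-center and cell-edge users, $M$ the number of base-station antennas, $p_{\max}$ the total normalized power, $\tau$ the fraction of the coherence interval used for data. *)

theory Defs
  imports Complex_Main
begin

definition R_mMIMO_max :: "real \<Rightarrow> real \<Rightarrow> real \<Rightarrow> real \<Rightarrow> nat \<Rightarrow> real" where
  "R_mMIMO_max \<tau> pmax \<beta>1 \<beta>2 M =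
     (if pmax \<ge> (\<beta>1 - \<beta>2) / (\<beta>1 * \<beta>2 * (real M - 2))
      then \<tau> * log 2 ((\<beta>1 + \<beta>2 + pmax * \<beta>1 * \<beta>2 * (real M - 2))^2 / (4 * \<beta>1 * \<beta>2))
      else \<tau> * log 2 (1 + pmax * \<beta>1 * (real M - 2)))"

definition R_NOMA_max :: "real \<Rightarrow> real \<Rightarrow> real \<Rightarrow> nat \<Rightarrow> real" where
  "R_NOMA_max \<tau> pmax \<beta>1 M = \<tau> * log 2 (1 + pmax * \<beta>1 * real M)"

definition M_star :: "real \<Rightarrow> real \<Rightarrow> real \<Rightarrow> real" where
  "M_star pmax \<beta>1 \<beta>2 = 2 + (\<beta>1 - \<beta>2) / (pmax * \<beta>1 * \<beta>2) + 2 * sqrt 2 / sqrt (pmax * \<beta>2)"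

end

theory Submission
  imports Defs
begin

theorem mainTheorem3:
  fixes M :: nat and \<tau> pmax \<beta>1 \<beta>2 :: real
  assumes "M > 2" and "\<tau> > 0" and "pmax > 0" and "\<beta>1 > \<beta>2" and "\<beta>2 > 0"
    and "real M \<ge> M_star pmax \<beta>1 \<beta>2"
  shows "R_mMIMO_max \<tau> pmax \<beta>1 \<beta>2 M \<ge> R_NOMA_max \<tau> pmax \<beta>1 M"
proof -
  define m where "m = real M - 2"
  define a where "a = pmax"
  have m0: "m > 0" using assms(1) unfolding m_def by simp
  have a0: "a > 0" using assms(3) a_def by simp
  have b1: "\<beta>1 > 0" using assms by simp
  define c where "c = 2 * sqrt 2 / sqrt (a * \<beta>2)"
  have s0: "sqrt (a * \<beta>2) > 0" using a0 assms(5) by simp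
  have c0: "c > 0" unfolding c_def using s0 by simp
  have csq: "c^2 = 8 / (a * \<beta>2)" unfolding c_def using a0 assms(5)
    by (simp add: power_divide power_mult_distrib)
  define d where "d = m - (\<beta>1 - \<beta>2) / (a * \<beta>1 * \<beta>2)"
  have dc: "d \<ge> c" using assms(6) unfolding d_def c_def m_def a_def M_star_def by simp
  have k0: "a * \<beta>1 * \<beta>2 > 0" using a0 b1 assms(5) by simp
  have xeq: "a * \<beta>1 * \<beta>2 * m - (\<beta>1 - \<beta>2) = a * \<beta>1 * \<beta>2 * d"
  proof -
    have "a * \<beta>1 * \<beta>2 * ((\<beta>1 - \<beta>2) / (a * \<beta>1 * \<beta>2)) = \<beta>1 - \<beta>2"
      using k0 by (metis less_irrefl nonzero_mult_div_cancel_left times_divide_eq_right)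
    thus ?thesis unfolding d_def by (simp add: right_diff_distrib)
  qed
  have cond: "pmax \<ge> (\<beta>1 - \<beta>2) / (\<beta>1 * \<beta>2 * (real M - 2))"
  proof -
    have "d > 0" using dc c0 by simp
    hence "a * \<beta>1 * \<beta>2 * m \<ge> \<beta>1 - \<beta>2" using xeq k0
      by (smt (verit) mult_pos_pos)
    hence "(\<beta>1 - \<beta>2) / (\<beta>1 * \<beta>2 * m) \<le> a" using b1 assms(5) m0
      by (simp add: divide_le_eq field_simps)
    thus ?thesis unfolding a_def m_def by simp
  qed
  have sq: "(a * \<beta>1 * \<beta>2 * d)^2 \<ge> (a * \<beta>1 * \<beta>2)^2 * c^2"
    using dc c0 k0 by (simp add: power_mult_distrib[symmetric] power_mono mult_left_mono)
  have "(a * \<beta>1 * \<beta>2)^2 * c^2 = 8 * a * \<beta>1^2 * \<beta>2"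
    using csq a0 assms(5) by (simp add: field_simps power2_eq_square)
  hence key: "(a * \<beta>1 * \<beta>2 * m - (\<beta>1 - \<beta>2))^2 \<ge> 8 * a * \<beta>1^2 * \<beta>2"
    using sq xeq by simp
  have ineq: "4 * \<beta>1 * \<beta>2 * (1 + a * \<beta>1 * (m + 2)) \<le> (\<beta>1 + \<beta>2 + a * \<beta>1 * \<beta>2 * m)^2"
    using key by (simp add: power2_eq_square algebra_simps)
  have p1: "0 < 1 + a * \<beta>1 * (m + 2)" using a0 b1 m0 by (simp add: add_pos_pos)
  have q: "4 * \<beta>1 * \<beta>2 > 0" using b1 assms(5) by simp
  have ineq2: "1 + a * \<beta>1 * (m + 2) \<le> (\<beta>1 + \<beta>2 + a * \<beta>1 * \<beta>2 * m)^2 / (4 * \<beta>1 * \<beta>2)"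
    using ineq q by (simp add: le_divide_eq mult.commute)
  have "log 2 (1 + a * \<beta>1 * (m + 2)) \<le> log 2 ((\<beta>1 + \<beta>2 + a * \<beta>1 * \<beta>2 * m)^2 / (4 * \<beta>1 * \<beta>2))"
    using ineq2 p1 by simp
  hence "\<tau> * log 2 (1 + a * \<beta>1 * (m + 2)) \<le> \<tau> * log 2 ((\<beta>1 + \<beta>2 + a * \<beta>1 * \<beta>2 * m)^2 / (4 * \<beta>1 * \<beta>2))"
    using assms(2) by simp
  moreover have "m + 2 = real M" unfolding m_def by simp
  ultimately show ?thesis using cond unfolding R_mMIMO_max_def R_NOMA_max_def a_def m_def
    by simp
qed

end
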